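(* Let $X$ be a CFG-space over a Boolean ring $B$ and $0\in X$. Then the pointed space $(X,0)$ possesses a base.
   Context: $B$ is a Boolean ring ($a\vee b=a+b+ab$, $a\le b\iff ab=a$, $\bar a=1+a$; $a_1\oplus\cdots\oplus a_n$ denotes a sum of pairwise disjoint elements). A Boolean metric space over $B$: set $X$ with $d:X\times X\to B$, $d(x,y)=0\iff x=y$, symmetric, $d(x,z)\le d(x,y)\vee d(y,z)$. For $x_1,\dots,x_n\in X$ and $a_1,\dots,a_n\in B$ with $a_1\oplus\cdots\oplus a_n=1$, $x$ is a convex combination of the $x_i$ with coefficients $a_i$ if $a_id(x,x_i)=0$ for all $i$. $X$ is convex if all such combinations exist; a CFG-space is a convex space in which every element is a convex combination of elements of some fixed finite subset. In a pointed space $(X,0)$ write $|x|=d(0,x)$. Two elements $x,y$ are orthogonal if $d(x,y)=|x|\vee|y|$. A finite set $R\subseteq X$ is orthogonal if $0\notin R$ and any two distinct elements of $R$ are orthogonal. A referential (reference system) of $(X,0)$ is an orthogonal set $R$ such that every element of $X$ is a convex combination of elements of $R\cup\{0\}$. A base of $(X,0)$ is a referential $\{x_1,\dots,x_n\}$ with $|x_1|\ge|x_2|\ge\cdots\ge|x_n|$. *)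

theory Defs
  imports Main
begin

text \<open>A Boolean ring with unit is the same thing as a Boolean algebra, via
  a*b = inf a b, a+b = symmetric difference, 0 = bot, 1 = top;
  then a \<or> b = a+b+ab = sup a b, a \<le> b iff ab = a is the lattice order,
  and 1+a = - a.\<close>

fun bjoin :: "(nat \<Rightarrow> 'b::boolean_algebra) \<Rightarrow> nat \<Rightarrow> 'b" where
  "bjoin a 0 = bot"
| "bjoin a (Suc n) = sup (bjoin a n) (a n)"

text \<open>a_0 \<oplus> ... \<oplus> a_(n-1) = 1 : pairwise disjoint with sum 1
  (for pairwise disjoint elements the ring sum is the join).\<close>
definition disj_partition :: "(nat \<Rightarrow> 'b::boolean_algebra) \<Rightarrow> nat \<Rightarrow> bool" where
  "disj_partition a n \<longleftrightarrow>
     (\<forall>i<n. \<forall>j<n. i \<noteq> j \<longrightarrow> inf (a i) (a j) = bot) \<and> bjoin a n = top"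

definition bool_metric_space :: "'a set \<Rightarrow> ('a \<Rightarrow> 'a \<Rightarrow> 'b::boolean_algebra) \<Rightarrow> bool" where
  "bool_metric_space X d \<longleftrightarrow>
     (\<forall>x\<in>X. \<forall>y\<in>X. (d x y = bot \<longleftrightarrow> x = y)) \<and>
     (\<forall>x\<in>X. \<forall>y\<in>X. d x y = d y x) \<and>
     (\<forall>x\<in>X. \<forall>y\<in>X. \<forall>z\<in>X. d x z \<le> sup (d x y) (d y z))"

definition convex_comb ::
  "('a \<Rightarrow> 'a \<Rightarrow> 'b::boolean_algebra) \<Rightarrow> 'a \<Rightarrow> (nat \<Rightarrow> 'a) \<Rightarrow> (nat \<Rightarrow> 'b) \<Rightarrow> nat \<Rightarrow> bool" where
  "convex_comb d x xs a n \<longleftrightarrow> disj_partition a n \<and> (\<forall>i<n. inf (a i) (d x (xs i)) = bot)"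

definition bconvex :: "'a set \<Rightarrow> ('a \<Rightarrow> 'a \<Rightarrow> 'b::boolean_algebra) \<Rightarrow> bool" where
  "bconvex X d \<longleftrightarrow>
     (\<forall>n xs a. (\<forall>i<n. xs i \<in> X) \<and> disj_partition a n \<longrightarrow> (\<exists>x\<in>X. convex_comb d x xs a n))"

definition conv_comb_of :: "('a \<Rightarrow> 'a \<Rightarrow> 'b::boolean_algebra) \<Rightarrow> 'a set \<Rightarrow> 'a \<Rightarrow> bool" where
  "conv_comb_of d S x \<longleftrightarrow> (\<exists>n xs a. (\<forall>i<n. xs i \<in> S) \<and> convex_comb d x xs a n)"

definition CFG_space :: "'a set \<Rightarrow> ('a \<Rightarrow> 'a \<Rightarrow> 'b::boolean_algebra) \<Rightarrow> bool" where
  "CFG_space X d \<longleftrightarrow> bool_metric_space X d \<and> bconvex X d \<and>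
     (\<exists>F. finite F \<and> F \<subseteq> X \<and> (\<forall>x\<in>X. conv_comb_of d F x))"

text \<open>Pointed space (X, z): |x| = d z x.\<close>
definition orthogonal :: "('a \<Rightarrow> 'a \<Rightarrow> 'b::boolean_algebra) \<Rightarrow> 'a \<Rightarrow> 'a \<Rightarrow> 'a \<Rightarrow> bool" where
  "orthogonal d z x y \<longleftrightarrow> d x y = sup (d z x) (d z y)"

definition orthogonal_set :: "'a set \<Rightarrow> ('a \<Rightarrow> 'a \<Rightarrow> 'b::boolean_algebra) \<Rightarrow> 'a \<Rightarrow> 'a set \<Rightarrow> bool" where
  "orthogonal_set X d z R \<longleftrightarrow> finite R \<and> R \<subseteq> X \<and> z \<notin> R \<and>
     (\<forall>x\<in>R. \<forall>y\<in>R. x \<noteq> y \<longrightarrow> orthogonal d z x y)"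

definition referential :: "'a set \<Rightarrow> ('a \<Rightarrow> 'a \<Rightarrow> 'b::boolean_algebra) \<Rightarrow> 'a \<Rightarrow> 'a set \<Rightarrow> bool" where
  "referential X d z R \<longleftrightarrow> orthogonal_set X d z R \<and>
     (\<forall>x\<in>X. conv_comb_of d (insert z R) x)"

definition is_base :: "'a set \<Rightarrow> ('a \<Rightarrow> 'a \<Rightarrow> 'b::boolean_algebra) \<Rightarrow> 'a \<Rightarrow> 'a list \<Rightarrow> bool" where
  "is_base X d z xs \<longleftrightarrow> distinct xs \<and> referential X d z (set xs) \<and>
     (\<forall>i j. i < j \<and> j < length xs \<longrightarrow> d z (xs ! j) \<le> d z (xs ! i))"

end

theory Submission imports Defs begin

lemma ba_shunt: "inf b (- a) = bot \<longleftrightarrow> (b::'b::boolean_algebra) \<le> a"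
proof
  assume h: "inf b (- a) = bot"
  have "b = inf b (sup a (- a))" by simp
  also have "\<dots> = sup (inf b a) (inf b (- a))" by (rule inf_sup_distrib1)
  also have "\<dots> = inf b a" using h by simp
  finally have "b = inf b a" .
  thus "b \<le> a" by (metis inf.cobounded2)
next
  assume "b \<le> a"
  hence "inf b (- a) \<le> inf a (- a)" by (rule inf_mono) simp
  thus "inf b (- a) = bot" by (simp add: le_bot)
qed
lemma ba_disj: "(inf b a = bot) \<longleftrightarrow> (b::'b::boolean_algebra) \<le> - a"
  using ba_shunt[of b "- a"] by simp
lemma split_eq: fixes u :: "'b::boolean_algebra"
  assumes "inf p u = inf p v" "inf (-p) u = inf (-p) v" shows "u = v"
proof -
  have "u = inf (sup p (-p)) u" by simp
  also have "\<dots> = sup (inf p u) (inf (-p) u)" by (rule inf_sup_distrib2)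
  also have "\<dots> = sup (inf p v) (inf (-p) v)" using assms by simp
  also have "\<dots> = inf (sup p (-p)) v" by (rule inf_sup_distrib2[symmetric])
  also have "\<dots> = v" by simp
  finally show ?thesis .
qed
lemma split3: fixes u :: "'b::boolean_algebra"
  assumes "inf p q = bot" "inf p u = inf p v" "inf q u = inf q v" "inf (inf (-p) (-q)) u = inf (inf (-p) (-q)) v" shows "u = v"
proof (rule split_eq[of p])
  show "inf p u = inf p v" by fact
  show "inf (-p) u = inf (-p) v"
  proof (rule split_eq[of q])
    have "q \<le> -p" using ba_disj[of q p] assms(1) by (simp add: inf_commute)
    hence qp: "inf q (-p) = q" by (simp add: inf_absorb1)
    have "inf q (inf (-p) u) = inf (inf q (-p)) u" by (rule inf_assoc[symmetric])
    also have "\<dots> = inf q u" by (simp only: qp)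
    also have "\<dots> = inf q v" by fact
    also have "\<dots> = inf (inf q (-p)) v" by (simp only: qp)
    also have "\<dots> = inf q (inf (-p) v)" by (rule inf_assoc)
    finally show "inf q (inf (-p) u) = inf q (inf (-p) v)" .
    have "inf (-q) (inf (-p) u) = inf (inf (-p) (-q)) u" by (simp add: inf_assoc inf_commute inf_left_commute)
    also have "\<dots> = inf (inf (-p) (-q)) v" by fact
    also have "\<dots> = inf (-q) (inf (-p) v)" by (simp add: inf_assoc inf_commute inf_left_commute)
    finally show "inf (-q) (inf (-p) u) = inf (-q) (inf (-p) v)" .
  qed
qed
lemma inf_bot_le: "(q::'b::boolean_algebra) \<le> p \<Longrightarrow> inf p c = bot \<Longrightarrow> inf q c = bot"
proof -
  assume "q \<le> p" "inf p c = bot"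
  have "inf q c \<le> inf p c" by (rule inf_mono[OF \<open>q \<le> p\<close> order_refl])
  thus ?thesis using \<open>inf p c = bot\<close> by (simp add: le_bot)
qed
lemma sup_compl_inf: "sup (- p) (inf p q) = sup (-p) (q::'b::boolean_algebra)"
  by (simp add: sup_inf_distrib1)

fun pref :: "(nat \<Rightarrow> 'b::boolean_algebra) \<Rightarrow> nat \<Rightarrow> 'b" where
  "pref g 0 = top"
| "pref g (Suc i) = inf (pref g i) (g i)"

lemma pref_le: "i < j \<Longrightarrow> pref g j \<le> g i"
proof (induction j)
  case 0 then show ?case by simp
next
  case (Suc j)
  have "pref g (Suc j) \<le> pref g j" "pref g (Suc j) \<le> g j" by simp_all
  show ?case
  proof (cases "i = j")
    case True then show ?thesis using \<open>pref g (Suc j) \<le> g j\<close> by simp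
  next
    case False
    hence "pref g j \<le> g i" using Suc by simp
    then show ?thesis using \<open>pref g (Suc j) \<le> pref g j\<close> by (rule order_trans[rotated])
  qed
qed

lemma pref_glb: "(\<forall>i<n. b \<le> g i) \<Longrightarrow> b \<le> pref g n"
  by (induction n) auto

lemma bjoin_bot: "(\<forall>i<n. inf b (a i) = bot) \<Longrightarrow> inf b (bjoin a n) = bot"
  by (induction n) (auto simp: inf_sup_distrib1)

locale bms =
  fixes X :: "'a set" and d :: "'a \<Rightarrow> 'a \<Rightarrow> 'b::boolean_algebra"
  assumes ms: "bool_metric_space X d"
begin

lemma d0: "x\<in>X \<Longrightarrow> y\<in>X \<Longrightarrow> d x y = bot \<longleftrightarrow> x = y"
proof -
  have "\<forall>x\<in>X. \<forall>y\<in>X. (d x y = bot \<longleftrightarrow> x = y)" using ms unfolding bool_metric_space_def by (elim conjE)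
  thus "x\<in>X \<Longrightarrow> y\<in>X \<Longrightarrow> d x y = bot \<longleftrightarrow> x = y" by blast
qed
lemma dsym: "x\<in>X \<Longrightarrow> y\<in>X \<Longrightarrow> d x y = d y x"
proof -
  have "\<forall>x\<in>X. \<forall>y\<in>X. d x y = d y x" using ms unfolding bool_metric_space_def by (elim conjE)
  thus "x\<in>X \<Longrightarrow> y\<in>X \<Longrightarrow> d x y = d y x" by blast
qed
lemma tri: "x\<in>X \<Longrightarrow> y\<in>X \<Longrightarrow> w\<in>X \<Longrightarrow> d x w \<le> sup (d x y) (d y w)"
proof -
  have "\<forall>x\<in>X. \<forall>y\<in>X. \<forall>z\<in>X. d x z \<le> sup (d x y) (d y z)" using ms unfolding bool_metric_space_def by (elim conjE)
  thus "x\<in>X \<Longrightarrow> y\<in>X \<Longrightarrow> w\<in>X \<Longrightarrow> d x w \<le> sup (d x y) (d y w)" by blast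
qed
lemma dself[simp]: "x\<in>X \<Longrightarrow> d x x = bot"
  using d0 by blast

lemma loc_eq1: assumes "u\<in>X" "v\<in>X" "q\<in>X" "inf p (d u v) = bot"
  shows "inf p (d u q) = inf p (d v q)"
proof -
  have a: "inf p (d u q) \<le> inf p (d v q)"
  proof -
    have "inf p (d u q) \<le> inf p (sup (d u v) (d v q))" by (rule inf_mono[OF order_refl tri[OF assms(1,2,3)]])
    also have "\<dots> = inf p (d v q)" using assms(4) by (simp add: inf_sup_distrib1)
    finally show ?thesis .
  qed
  have "inf p (d v u) = bot" using assms(4) dsym[OF assms(1,2)] by simp
  have b: "inf p (d v q) \<le> inf p (d u q)"
  proof -
    have "inf p (d v q) \<le> inf p (sup (d v u) (d u q))" by (rule inf_mono[OF order_refl tri[OF assms(2,1,3)]])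
    also have "\<dots> = inf p (d u q)" using \<open>inf p (d v u) = bot\<close> by (simp add: inf_sup_distrib1)
    finally show ?thesis .
  qed
  from a b show ?thesis by (rule order.antisym)
qed

lemma loc_eq2: assumes "u\<in>X" "v\<in>X" "q\<in>X" "inf p (d u v) = bot"
  shows "inf p (d q u) = inf p (d q v)"
proof -
  have "d q u = d u q" "d q v = d v q" using dsym[OF assms(3,1)] dsym[OF assms(3,2)] by auto
  thus ?thesis using loc_eq1[OF assms] by simp
qed

lemma loc_sub: "(q::'b) \<le> p \<Longrightarrow> inf p c = bot \<Longrightarrow> inf q c = bot"
  by (rule inf_bot_le)

definition loc :: "'a set \<Rightarrow> 'a \<Rightarrow> bool" where
  "loc S x \<longleftrightarrow> (\<forall>b. (\<forall>s\<in>S. b \<le> d x s) \<longrightarrow> b = bot)"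

lemma loc_mono: "S \<subseteq> T \<Longrightarrow> loc S x \<Longrightarrow> loc T x"
  unfolding loc_def by blast

lemma loc_mem: "x \<in> S \<Longrightarrow> x \<in> X \<Longrightarrow> loc S x"
proof -
  assume "x \<in> S" "x \<in> X"
  show "loc S x" unfolding loc_def
  proof (intro allI impI)
    fix b assume "\<forall>s\<in>S. b \<le> d x s"
    hence "b \<le> d x x" using \<open>x \<in> S\<close> by blast
    thus "b = bot" using \<open>x \<in> X\<close> by (simp add: le_bot)
  qed
qed

lemma loc_trans: assumes "S \<subseteq> X" "T \<subseteq> X" "f \<in> X" "loc S f" "\<forall>s\<in>S. loc T s"
  shows "loc T f"
  unfolding loc_def
proof (intro allI impI)
  fix b assume hb: "\<forall>t\<in>T. b \<le> d f t"
  have "\<forall>s\<in>S. b \<le> d f s"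
  proof
    fix s assume s: "s \<in> S"
    define c where "c = inf b (- d f s)"
    have "\<forall>t\<in>T. c \<le> d s t"
    proof
      fix t assume t: "t \<in> T"
      have "s \<in> X" "t \<in> X" using assms s t by auto
      have "c \<le> b" unfolding c_def by simp
      also have "b \<le> d f t" using hb t by blast
      also have "d f t \<le> sup (d f s) (d s t)" by (rule tri[OF assms(3) \<open>s \<in> X\<close> \<open>t \<in> X\<close>])
      finally have "c \<le> sup (d f s) (d s t)" .
      moreover have "c \<le> - d f s" unfolding c_def by simp
      ultimately have "c \<le> inf (sup (d f s) (d s t)) (- d f s)" by simp
      also have "\<dots> \<le> d s t" by (simp add: inf_sup_distrib2)
      finally show "c \<le> d s t" .
    qed
    hence "c = bot" using assms(5) s unfolding loc_def by blast
    thus "b \<le> d f s" unfolding c_def using ba_shunt by blast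
  qed
  thus "b = bot" using assms(4) unfolding loc_def by blast
qed

lemma conv_loc: "conv_comb_of d S x \<Longrightarrow> loc S x"
  unfolding loc_def conv_comb_of_def convex_comb_def disj_partition_def
proof (intro allI impI, elim exE conjE)
  fix b n xs a
  assume h: "\<forall>s\<in>S. b \<le> d x s" "\<forall>i<n. xs i \<in> S" "bjoin a n = top"
    "\<forall>i<n. inf (a i) (d x (xs i)) = bot"
  have "\<forall>i<n. inf b (a i) = bot"
  proof (intro allI impI)
    fix i assume "i < n"
    hence "b \<le> d x (xs i)" "inf (a i) (d x (xs i)) = bot" using h by auto
    thus "inf b (a i) = bot" using inf_bot_le[of b "d x (xs i)" "a i"] by (simp add: inf_commute)
  qed
  hence "inf b (bjoin a n) = bot" by (rule bjoin_bot)
  thus "b = bot" using h(3) by simp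
qed

end

lemma loc_conv_aux:
  fixes d :: "'a \<Rightarrow> 'a \<Rightarrow> 'b::boolean_algebra"
  assumes "finite S" "\<forall>b. (\<forall>s\<in>S. b \<le> d x s) \<longrightarrow> b = bot"
  shows "conv_comb_of d S x"
proof -
  obtain l where l: "set l = S" using finite_list assms(1) by blast
  define m where "m = length l"
  define s where "s = (\<lambda>i. l ! i)"
  define g where "g = (\<lambda>i. d x (s i))"
  define a where "a = (\<lambda>i. inf (pref g i) (- g i))"
  have bj: "bjoin a i = - pref g i" for i
    by (induction i) (simp_all add: a_def sup_compl_inf)
  have "\<forall>t\<in>S. pref g m \<le> d x t"
  proof
    fix t assume "t \<in> S"
    then obtain i where "i < m" "t = s i" using l unfolding m_def s_def by (auto simp: in_set_conv_nth)
    thus "pref g m \<le> d x t" using pref_le unfolding g_def by blast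
  qed
  hence pm: "pref g m = bot" using assms(2) by blast
  have disj: "inf (a i) (a j) = bot" if "i < j" for i j
  proof -
    have h1: "a j \<le> g i" using pref_le[OF that] unfolding a_def by (rule le_infI1)
    have h2: "a i \<le> - g i" unfolding a_def by simp
    have "inf (a i) (a j) \<le> inf (- g i) (g i)" by (rule inf_mono[OF h2 h1])
    thus ?thesis using le_bot by simp
  qed
  have "convex_comb d x s a m"
    unfolding convex_comb_def disj_partition_def
  proof (intro conjI allI impI)
    fix i j assume "i < m" "j < m" "i \<noteq> j"
    then show "inf (a i) (a j) = bot" using disj[of i j] disj[of j i] by (auto simp: inf_commute linorder_neq_iff)
  next
    show "bjoin a m = top" using bj pm by simp
  next
    fix i show "inf (a i) (d x (s i)) = bot" unfolding a_def g_def
      by (simp add: inf_assoc)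
  qed
  moreover have "\<forall>i<m. s i \<in> S" using l unfolding s_def m_def by auto
  ultimately show ?thesis unfolding conv_comb_of_def by blast
qed


lemma inf_le_bot: "(x::'b::boolean_algebra) \<le> y \<Longrightarrow> y = bot \<Longrightarrow> x = bot"
  by (simp add: le_bot)

lemma G_lemma: "inf (inf (-(p::'b::boolean_algebra)) (-q)) (sup (sup p a) (sup q b)) = inf (inf (-p) (-q)) (sup a b)"
proof -
  have "sup (sup p a) (sup q b) = sup (sup p q) (sup a b)" by (simp add: sup_aci)
  moreover have "inf (-p) (-q) = - sup p q" by simp
  moreover have "inf (- sup p q) (sup (sup p q) (sup a b)) = inf (- sup p q) (sup a b)"
    by (simp add: inf_sup_distrib1)
  ultimately show ?thesis by simp
qed

locale cfg = bms +
  fixes z :: 'a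
  assumes zX: "z \<in> X" and cvx: "bconvex X d"
begin

lemma glue: assumes "y \<in> X" "w \<in> X"
  shows "\<exists>x\<in>X. inf p (d x y) = bot \<and> inf (-p) (d x w) = bot"
proof -
  define xs where "xs = (\<lambda>i::nat. if i = 0 then y else w)"
  define a where "a = (\<lambda>i::nat. if i = 0 then p else -p)"
  have "disj_partition a 2" unfolding disj_partition_def
  proof (intro conjI allI impI)
    fix i j :: nat assume "i<2" "j<2" "i\<noteq>j"
    then have "(i=0 \<and> j=1) \<or> (i=1 \<and> j=0)" by auto
    then show "inf (a i) (a j) = bot" unfolding a_def by auto
  next
    show "bjoin a 2 = top" by (simp add: numeral_2_eq_2 a_def)
  qed
  moreover have "\<forall>i<2. xs i \<in> X" using assms unfolding xs_def by simp
  ultimately obtain x where x: "x\<in>X" "convex_comb d x xs a 2" using cvx unfolding bconvex_def by blast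
  then have "\<forall>i<2. inf (a i) (d x (xs i)) = bot" unfolding convex_comb_def by blast
  then have "inf (a 0) (d x (xs 0)) = bot" "inf (a 1) (d x (xs 1)) = bot" by auto
  then show ?thesis using x(1) unfolding a_def xs_def by auto
qed

definition oinv :: "(nat \<Rightarrow> 'a) \<Rightarrow> nat \<Rightarrow> bool" where
 "oinv x n \<longleftrightarrow> (\<forall>i<n. x i \<in> X \<and> x i \<noteq> z) \<and>
   (\<forall>i j. i<j \<longrightarrow> j<n \<longrightarrow> d (x i) (x j) = sup (d z (x i)) (d z (x j)) \<and> d z (x j) \<le> d z (x i))"

lemma step:
  assumes inv: "oinv x n" and yX: "y \<in> X"
  shows "\<exists>x' n'. oinv x' n' \<and> (\<forall>i<n. loc (insert z (x' ` {..<n'})) (x i))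
           \<and> loc (insert z (x' ` {..<n'})) y"
proof -
  define xe where "xe = (\<lambda>k. if k < n then x k else z)"
  define A where "A = (\<lambda>k. d z (xe k))"
  define P where "P = (\<lambda>k. if k = 0 then top else A (k - 1))"
  define e where "e = inf (d y z) (pref (\<lambda>i. d y (x i)) n)"
  define E where "E = (\<lambda>k. inf e (inf (P k) (- A k)))"
  define x' where "x' = (\<lambda>k. SOME w. w \<in> X \<and> inf (E k) (d w y) = bot \<and> inf (- E k) (d w (xe k)) = bot)"
  define n' where "n' = (if x' n = z then n else Suc n)"
  have xX: "x i \<in> X" "x i \<noteq> z" if "i < n" for i using inv that unfolding oinv_def by auto
  have xeX: "xe k \<in> X" for k using xX zX unfolding xe_def by auto
  have x'p: "x' k \<in> X \<and> inf (E k) (d (x' k) y) = bot \<and> inf (- E k) (d (x' k) (xe k)) = bot" for k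
  proof -
    have "\<exists>w. w \<in> X \<and> inf (E k) (d w y) = bot \<and> inf (- E k) (d w (xe k)) = bot"
      using glue[OF yX xeX] by blast
    then show ?thesis unfolding x'_def by (rule someI_ex)
  qed
  hence x'X: "x' k \<in> X" and x'E: "inf (E k) (d (x' k) y) = bot"
    and x'nE: "inf (-E k) (d (x' k) (xe k)) = bot" for k by auto
  have An: "A k = bot" if "n \<le> k" for k unfolding A_def xe_def using zX that by simp
  have Amono: "A j \<le> A i" if "i \<le> j" for i j
  proof (cases "j < n")
    case True
    show ?thesis
    proof (cases "i = j")
      case True thus ?thesis by simp
    next
      case False
      hence "i < j" using that by simp
      thus ?thesis using inv \<open>j<n\<close> unfolding oinv_def A_def xe_def by auto
    qed
  next
    case False
    thus ?thesis using An[of j] by simp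
  qed
  have orth_e: "d (xe i) (xe j) = sup (A i) (A j)" if "i < j" for i j
  proof (cases "j < n")
    case True thus ?thesis using inv that unfolding oinv_def A_def xe_def by auto
  next
    case False
    hence "xe j = z" "A j = bot" using An[of j] unfolding xe_def by auto
    moreover have "d (xe i) z = A i" unfolding A_def using dsym[OF xeX zX] by simp
    ultimately show ?thesis by simp
  qed
  have EP: "E k \<le> P k" for k unfolding E_def by (simp add: le_infI2)
  have Edisj: "inf (E i) (E j) = bot" if "i < j" for i j
  proof -
    have "E j \<le> P j" by (rule EP)
    also have "P j = A (j-1)" using that unfolding P_def by simp
    also have "A (j-1) \<le> A i" using Amono that by simp
    finally have h1: "E j \<le> A i" .
    have h2: "E i \<le> - A i" unfolding E_def by (simp add: le_infI2)
    have "inf (E i) (E j) \<le> inf (- A i) (A i)" by (rule inf_mono[OF h2 h1])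
    thus ?thesis by (simp add: le_bot)
  qed
  have Ee: "E k \<le> e" for k unfolding E_def by simp
  have ey: "e \<le> d y (xe k)" for k
  proof (cases "k < n")
    case True
    have "e \<le> pref (\<lambda>i. d y (x i)) n" unfolding e_def by simp
    also have "\<dots> \<le> d y (x k)" using pref_le[OF True, of "\<lambda>i. d y (x i)"] by simp
    finally show ?thesis using True unfolding xe_def by simp
  next
    case False thus ?thesis unfolding e_def xe_def by simp
  qed
  have eyz: "e \<le> d y z" unfolding e_def by simp
  have Ey: "E k \<le> d (xe k) y" for k using order_trans[OF Ee[of k] ey[of k]] dsym[OF yX xeX[of k]] by simp
  have Ey2: "E k \<le> d y (xe k)" for k using order_trans[OF Ee[of k] ey[of k]] .
  have Ezy: "E k \<le> d z y" for k using order_trans[OF Ee[of k] eyz] dsym[OF yX zX] by simp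
  have norm: "d z (x' k) = sup (E k) (A k)" for k
  proof (rule split_eq[of "E k"])
    have "inf (E k) (d z (x' k)) = inf (E k) (d z y)" by (rule loc_eq2[OF x'X yX zX x'E])
    also have "\<dots> = E k" using Ezy[of k] by (simp add: inf_absorb1)
    also have "\<dots> = inf (E k) (sup (E k) (A k))" by simp
    finally show "inf (E k) (d z (x' k)) = inf (E k) (sup (E k) (A k))" .
    have "inf (-E k) (d z (x' k)) = inf (-E k) (d z (xe k))" by (rule loc_eq2[OF x'X xeX zX x'nE])
    also have "\<dots> = inf (-E k) (sup (E k) (A k))" unfolding A_def by (simp add: inf_sup_distrib1)
    finally show "inf (-E k) (d z (x' k)) = inf (-E k) (sup (E k) (A k))" .
  qed
  have orthn: "d (x' i) (x' j) = sup (d z (x' i)) (d z (x' j))" if "i < j" for i j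
  proof (rule split3[of "E i" "E j"])
    show "inf (E i) (E j) = bot" by (rule Edisj[OF that])
    have Ei_nEj: "E i \<le> - E j" using Edisj[OF that] ba_disj by blast
    have Ej_nEi: "E j \<le> - E i" using Edisj[OF that] ba_disj[of "E j" "E i"] by (simp add: inf_commute)
    have "inf (E i) (d (x' i) (x' j)) = inf (E i) (d y (x' j))" by (rule loc_eq1[OF x'X yX x'X x'E])
    also have "\<dots> = inf (E i) (d y (xe j))" by (rule loc_eq2[OF x'X xeX yX loc_sub[OF Ei_nEj x'nE]])
    also have "\<dots> = E i" using Ey2[of j] Ee[of i] ey[of j] by (simp add: inf_absorb1)
    also have "\<dots> = inf (E i) (sup (d z (x' i)) (d z (x' j)))" unfolding norm by (rule inf_absorb1[symmetric]) (simp add: le_supI1)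
    finally show "inf (E i) (d (x' i) (x' j)) = inf (E i) (sup (d z (x' i)) (d z (x' j)))" .
    have "inf (E j) (d (x' i) (x' j)) = inf (E j) (d (xe i) (x' j))" by (rule loc_eq1[OF x'X xeX x'X loc_sub[OF Ej_nEi x'nE]])
    also have "\<dots> = inf (E j) (d (xe i) y)" by (rule loc_eq2[OF x'X yX xeX x'E])
    also have "\<dots> = E j" using order_trans[OF Ee[of j] ey[of i]] dsym[OF yX xeX[of i]] by (simp add: inf_absorb1)
    also have "\<dots> = inf (E j) (sup (d z (x' i)) (d z (x' j)))" unfolding norm by (rule inf_absorb1[symmetric]) (simp add: le_supI2)
    finally show "inf (E j) (d (x' i) (x' j)) = inf (E j) (sup (d z (x' i)) (d z (x' j)))" .
    define G where "G = inf (- E i) (- E j)"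
    have G1: "G \<le> - E i" and G2: "G \<le> - E j" unfolding G_def by simp_all
    have "inf G (d (x' i) (x' j)) = inf G (d (xe i) (x' j))" by (rule loc_eq1[OF x'X xeX x'X loc_sub[OF G1 x'nE]])
    also have "\<dots> = inf G (d (xe i) (xe j))" by (rule loc_eq2[OF x'X xeX xeX loc_sub[OF G2 x'nE]])
    also have "\<dots> = inf G (sup (A i) (A j))" using orth_e[OF that] by simp
    also have "\<dots> = inf G (sup (sup (E i) (A i)) (sup (E j) (A j)))" unfolding G_def by (rule G_lemma[symmetric])
    also have "\<dots> = inf G (sup (d z (x' i)) (d z (x' j)))" unfolding norm ..
    finally show "inf (inf (- E i) (- E j)) (d (x' i) (x' j)) = inf (inf (- E i) (- E j)) (sup (d z (x' i)) (d z (x' j)))"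
      unfolding G_def .
  qed
  have decn: "d z (x' j) \<le> d z (x' i)" if "i < j" for i j
  proof -
    have "E j \<le> P j" by (rule EP)
    also have "P j = A (j-1)" using that unfolding P_def by simp
    also have "A (j-1) \<le> A i" using Amono that by simp
    finally have "E j \<le> A i" .
    moreover have "A j \<le> A i" using Amono that by simp
    ultimately have "sup (E j) (A j) \<le> sup (E i) (A i)" by (simp add: le_supI2)
    thus ?thesis unfolding norm .
  qed
  have x'nz: "x' k \<noteq> z" if "k < n" for k
  proof
    assume "x' k = z"
    hence "d z (x' k) = bot" using zX by simp
    hence "A k = bot" unfolding norm by simp
    hence "d z (x k) = bot" unfolding A_def xe_def using that by simp
    thus False using d0[OF zX xX(1)[OF that]] xX(2)[OF that] by simp
  qed
  define S' where "S' = insert z (x' ` {..<n'})"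
  have nn': "n \<le> n'" unfolding n'_def by simp
  have inS: "x' k \<in> S'" if "k \<le> n" for k
  proof (cases "k < n")
    case True thus ?thesis using nn' unfolding S'_def by auto
  next
    case False
    hence "k = n" using that by simp
    thus ?thesis unfolding S'_def n'_def by auto
  qed
  have zS: "z \<in> S'" unfolding S'_def by simp
  have oi: "oinv x' n'"
    unfolding oinv_def
  proof (intro conjI allI impI)
    fix i assume "i < n'"
    show "x' i \<in> X" by (rule x'X)
    show "x' i \<noteq> z"
    proof (cases "i < n")
      case True thus ?thesis by (rule x'nz)
    next
      case False
      hence "i = n" "n' = Suc n" using \<open>i < n'\<close> unfolding n'_def by (auto split: if_splits)
      thus ?thesis unfolding n'_def by (auto split: if_splits)
    qed
  next
    fix i j assume "i < j" "j < n'"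
    show "d (x' i) (x' j) = sup (d z (x' i)) (d z (x' j))" by (rule orthn[OF \<open>i<j\<close>])
    show "d z (x' j) \<le> d z (x' i)" by (rule decn[OF \<open>i<j\<close>])
  qed
  have locx: "loc S' (x i)" if "i < n" for i
    unfolding loc_def
  proof (intro allI impI)
    fix b assume hb: "\<forall>s\<in>S'. b \<le> d (x i) s"
    have b1: "b \<le> d (x i) (x' i)" using hb inS[of i] that by simp
    have b2: "b \<le> d (x i) z" using hb zS by simp
    have xei: "xe i = x i" using that unfolding xe_def by simp
    have "inf (-E i) b \<le> inf (-E i) (d (x' i) (x i))"
      using inf_mono[OF order_refl b1] dsym[OF xX(1)[OF that] x'X[of i]] by simp
    also have "\<dots> = bot" using x'nE[of i] xei by simp
    finally have c1: "inf (-E i) b = bot" by (simp add: le_bot)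
    have h2: "E i \<le> - A i" unfolding E_def by (simp add: le_infI2)
    have "d (x i) z = A i" unfolding A_def using xei dsym[OF xX(1)[OF that] zX] by simp
    hence "inf (E i) b \<le> inf (- A i) (A i)" using inf_mono[OF h2 b2] by simp
    hence c2: "inf (E i) b = bot" by (simp add: le_bot)
    show "b = bot" by (rule split_eq[of "E i"]) (simp_all add: c1 c2)
  qed
  have locy: "loc S' y"
    unfolding loc_def
  proof (intro allI impI)
    fix b assume hb: "\<forall>s\<in>S'. b \<le> d y s"
    have bk: "b \<le> d y (x' k)" if "k \<le> n" for k using hb inS[OF that] by simp
    have bE: "inf b (E k) = bot" if "k \<le> n" for k
    proof -
      have "inf b (E k) \<le> inf (d y (x' k)) (E k)" using inf_mono[OF bk[OF that] order_refl] .
      also have "\<dots> = inf (E k) (d (x' k) y)" using dsym[OF yX x'X[of k]] by (simp add: inf_commute)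
      also have "\<dots> = bot" by (rule x'E)
      finally show ?thesis by (simp add: le_bot)
    qed
    have bxe: "b \<le> d y (xe k)" if "k \<le> n" for k
    proof -
      have "b \<le> - E k" using bE[OF that] ba_disj by blast
      hence "b = inf (-E k) b" by (simp add: inf_absorb2)
      also have "\<dots> \<le> inf (-E k) (d y (x' k))" using inf_mono[OF order_refl bk[OF that]] .
      also have "\<dots> = inf (-E k) (d y (xe k))" by (rule loc_eq2[OF x'X xeX yX x'nE])
      also have "\<dots> \<le> d y (xe k)" by simp
      finally show ?thesis .
    qed
    have "b \<le> pref (\<lambda>i. d y (x i)) n"
    proof (rule pref_glb, intro allI impI)
      fix i assume "i < n"
      thus "b \<le> d y (x i)" using bxe[of i] unfolding xe_def by simp
    qed
    moreover have "b \<le> d y z" using hb zS by simp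
    ultimately have be: "b \<le> e" unfolding e_def by simp
    have key: "b \<le> A k" if "k \<le> n" for k
      using that
    proof (induction k)
      case 0
      have "inf b (E 0) = inf (inf b e) (- A 0)" unfolding E_def P_def by (simp add: inf_assoc)
      also have "\<dots> = inf b (- A 0)" using be by (simp add: inf_absorb1)
      finally have "inf b (- A 0) = bot" using bE[OF 0] by simp
      thus ?case using ba_shunt by blast
    next
      case (Suc k)
      hence bA: "b \<le> A k" by simp
      have "inf b (E (Suc k)) = inf (inf (inf b e) (A k)) (- A (Suc k))" unfolding E_def P_def by (simp add: inf_assoc)
      also have "\<dots> = inf b (- A (Suc k))" using be bA by (simp add: inf_absorb1)
      finally have "inf b (- A (Suc k)) = bot" using bE[OF Suc.prems] by simp
      thus ?case using ba_shunt by blast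
    qed
    have "b \<le> A n" by (rule key) simp
    thus "b = bot" using An[of n] by (simp add: le_bot)
  qed
  show ?thesis using oi locx locy unfolding S'_def by blast
qed


lemma all_F: "finite F \<Longrightarrow> F \<subseteq> X \<Longrightarrow> \<exists>x n. oinv x n \<and> (\<forall>f\<in>F. loc (insert z (x ` {..<n})) f)"
proof (induction F rule: finite_induct)
  case empty
  have "oinv (\<lambda>_. z) 0" unfolding oinv_def by simp
  thus ?case by blast
next
  case (insert y F)
  from insert.IH insert.prems obtain x n where inv: "oinv x n"
    and hF: "\<forall>f\<in>F. loc (insert z (x ` {..<n})) f" by auto
  have yX: "y \<in> X" using insert.prems by simp
  obtain x' n' where inv': "oinv x' n'" and lx: "\<forall>i<n. loc (insert z (x' ` {..<n'})) (x i)"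
    and ly: "loc (insert z (x' ` {..<n'})) y"
    using step[OF inv yX] by blast
  have S1: "insert z (x ` {..<n}) \<subseteq> X" using inv zX unfolding oinv_def by auto
  have S2: "insert z (x' ` {..<n'}) \<subseteq> X" using inv' zX unfolding oinv_def by auto
  have all: "\<forall>s\<in>insert z (x ` {..<n}). loc (insert z (x' ` {..<n'})) s"
  proof
    fix s assume "s \<in> insert z (x ` {..<n})"
    then show "loc (insert z (x' ` {..<n'})) s"
    proof
      assume "s = z" thus ?thesis using loc_mem[of z "insert z (x' ` {..<n'})"] zX by simp
    next
      assume "s \<in> x ` {..<n}" then obtain i where "i<n" "s = x i" by auto
      thus ?thesis using lx by simp
    qed
  qed
  have "\<forall>f\<in>insert y F. loc (insert z (x' ` {..<n'})) f"
  proof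
    fix f assume "f \<in> insert y F"
    then show "loc (insert z (x' ` {..<n'})) f"
    proof
      assume "f = y" thus ?thesis using ly by simp
    next
      assume "f \<in> F"
      hence fX: "f \<in> X" using insert.prems by auto
      have "loc (insert z (x ` {..<n})) f" using hF \<open>f \<in> F\<close> by blast
      thus ?thesis by (rule loc_trans[OF S1 S2 fX _ all])
    qed
  qed
  thus ?case using inv' by blast
qed

end

theorem mainTheorem4:
  fixes X :: "'a set" and d :: "'a \<Rightarrow> 'a \<Rightarrow> 'b::boolean_algebra" and z :: 'a
  assumes "CFG_space X d" and "z \<in> X"
  shows "\<exists>xs. is_base X d z xs"
proof -
  from assms(1) have ms: "bool_metric_space X d" and cv: "bconvex X d"
    and "\<exists>F. finite F \<and> F \<subseteq> X \<and> (\<forall>x\<in>X. conv_comb_of d F x)" unfolding CFG_space_def by auto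
  then obtain F where F: "finite F" "F \<subseteq> X" "\<forall>x\<in>X. conv_comb_of d F x" by blast
  have "cfg X d z" unfolding cfg_def cfg_axioms_def bms_def using ms cv assms(2) by auto
  then interpret cfg X d z .
  obtain x n where inv: "oinv x n" and hF: "\<forall>f\<in>F. loc (insert z (x ` {..<n})) f"
    using all_F[OF F(1,2)] by blast
  have xX: "x i \<in> X" "x i \<noteq> z" if "i < n" for i using inv that unfolding oinv_def by auto
  have orth: "d (x i) (x j) = sup (d z (x i)) (d z (x j))" if "i < j" "j < n" for i j
    using inv that unfolding oinv_def by blast
  have dec: "d z (x j) \<le> d z (x i)" if "i < j" "j < n" for i j
    using inv that unfolding oinv_def by blast
  define xs where "xs = map x [0..<n]"
  have setxs: "set xs = x ` {..<n}" by (auto simp: xs_def)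
  have len: "length xs = n" by (simp add: xs_def)
  have nth: "xs ! i = x i" if "i < n" for i using that by (simp add: xs_def)
  have neq: "x i \<noteq> x j" if "i < j" "j < n" for i j
  proof
    assume eq: "x i = x j"
    have "d (x i) (x j) = bot" using eq xX(1)[of j] that by simp
    hence "sup (d z (x i)) (d z (x j)) = bot" using orth[OF that] by simp
    hence "d z (x i) = bot" by simp
    hence "z = x i" using d0[OF assms(2) xX(1)[of i]] that by simp
    thus False using xX(2)[of i] that by simp
  qed
  have dist: "distinct xs"
    unfolding distinct_conv_nth len
  proof (intro allI impI)
    fix i j assume "i < n" "j < n" "i \<noteq> j"
    thus "xs ! i \<noteq> xs ! j" using neq[of i j] neq[of j i] nth[of i] nth[of j]
      by (auto simp: linorder_neq_iff)
  qed
  have sX: "set xs \<subseteq> X" using xX(1) setxs by auto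
  have zn: "z \<notin> set xs" using xX(2) setxs by auto
  have orthset: "orthogonal_set X d z (set xs)"
    unfolding orthogonal_set_def orthogonal_def
  proof (intro conjI ballI impI)
    show "finite (set xs)" by simp
    show "set xs \<subseteq> X" by (rule sX)
    show "z \<notin> set xs" by (rule zn)
  next
    fix a b assume "a \<in> set xs" "b \<in> set xs" "a \<noteq> b"
    then obtain i j where ij: "i < n" "j < n" "a = x i" "b = x j" using setxs by auto
    with \<open>a \<noteq> b\<close> have "i \<noteq> j" by auto
    show "d a b = sup (d z a) (d z b)"
    proof (cases "i < j")
      case True thus ?thesis using orth[OF True ij(2)] ij by simp
    next
      case False
      hence "j < i" using \<open>i \<noteq> j\<close> by simp
      hence "d (x j) (x i) = sup (d z (x j)) (d z (x i))" using orth ij(1) by blast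
      moreover have "d (x i) (x j) = d (x j) (x i)" using dsym[OF xX(1)[OF ij(1)] xX(1)[OF ij(2)]] .
      ultimately show ?thesis using ij by (simp add: sup_commute)
    qed
  qed
  have S: "insert z (set xs) \<subseteq> X" using sX assms(2) by auto
  have conv: "conv_comb_of d (insert z (set xs)) y" if "y \<in> X" for y
  proof -
    have "loc F y" using F(3) that conv_loc by blast
    hence "loc (insert z (set xs)) y"
      using loc_trans[OF F(2) S that] hF setxs by auto
    thus ?thesis using loc_conv_aux[of "insert z (set xs)" d y] unfolding loc_def by simp
  qed
  have "referential X d z (set xs)" unfolding referential_def using orthset conv by blast
  moreover have "\<forall>i j. i < j \<and> j < length xs \<longrightarrow> d z (xs ! j) \<le> d z (xs ! i)"
    using dec nth len by auto
  ultimately have "is_base X d z xs" unfolding is_base_def using dist by blast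
  thus ?thesis by blast
qed

end
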